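(* Let $m\geq1$, let $\pi\in S_n$ produce the history $(T_1,\dots,T_n)$ and let $H=\Phi(T_1,\dots,T_n)$ be its historic tree. Suppose vertex $i$ of $H$ is a branching, so that inserting $\pi(i)$ splits a leaf, and let $K_i\in\{1,\dots,n\}$ be the median key of that leaf (the key pushed upwards from it). Let $j\in\{i+1,\dots,n\}$. Then $\pi(j)>K_i$ if $j$ is to the right of $i$ in $H$, and $\pi(j)<K_i$ otherwise. Moreover, if $j>i$ is also a branching, with $K_j$ the key pushed upwards from the leaf split at time $j$, then $K_j>K_i$ if $j$ is to the right of $i$, and $K_j<K_i$ otherwise.
   Context: A $B$-tree of order $2m+1$ is a rooted plane search tree whose nodes contain pairwise distinct keys in increasing left-to-right order, every non-root node has between $m$ and $2m$ keys, the root between $1$ and $2m$, all leaves have equal depth. Insertion: place the new key in the appropriate leaf; whenever a node has $2m+1$ keys, split it, moving the median key up into the parent and forming two nodes from the $m$ smallest and $m$ largest keys (new one-key root if the root splits). A permutation $\pi\in S_n$ used as key sequence means inserting $\pi(1),\dots,\pi(n)$ successively into the empty tree; the produced history is $(T_1,\dots,T_n)$ with $T_i$ the tree (up to isomorphism of rooted plane trees) after $i$ insertions; leaves are numbered left to right. A $(2m+1)$-historic tree on $n$ vertices is a rooted plane tree with vertices labelled bijectively by $\{1,\dots,n\}$, labels increasing along every root-to-leaf path, where (root at height $0$) vertices at heights $2m+j(m+1)$, $j\geq 0$, called branchings, have two ordered child slots (left, right), each possibly occupied, and all other vertices have a single child slot; unoccupied slots are external vertices, ordered left to right. $\Phi$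 maps a history to a historic tree recursively: $\Phi(T_1)$ is the one-vertex tree; if $T_{k+1}$ arises from $T_k$ by inserting into the $i$-th leaf of $T_k$ (before splits), then $\Phi(T_1,\dots,T_{k+1})$ is $\Phi(T_1,\dots,T_k)$ with a vertex labelled $k+1$ placed at its $i$-th external vertex. For a branching $i$ and a vertex $j>i$ of $H$ (so $j$ is not an ancestor of $i$), $j$ is "to the right of $i$" if either $j$ lies in the subtree of the right child of $i$, or $j$ is not a descendant of $i$ and, with $w$ the lowest common ancestor of $i$ and $j$ (a branching having $i$ and $j$ in different child subtrees), $j$ lies in the subtree of the right child of $w$. *)

theory Defs
  imports Main "HOL-Library.Sublist"
begin

text \<open>A node stores its keys in increasing order; an internal node with k keys has k+1 children.
  The empty tree is Leaf [].\<close>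
datatype btree = Leaf "nat list" | Node "nat list" "btree list"

datatype ires = Done btree | Up btree nat btree

definition cidx :: "nat list \<Rightarrow> nat \<Rightarrow> nat" where
  "cidx ks x = length (filter (\<lambda>k. k < x) ks)"

lemma size_nth_less: "i < length ts \<Longrightarrow> size (ts ! i) < Suc (size_list size ts)"
  using size_list_estimation'[OF nth_mem[of i ts], of "size (ts ! i)" size] by simp

definition leaf_res :: "nat \<Rightarrow> nat list \<Rightarrow> ires" where
  "leaf_res m ks' =
     (if length ks' \<le> 2*m then Done (Leaf ks')
      else Up (Leaf (take m ks')) (ks' ! m) (Leaf (drop (Suc m) ks')))"

definition node_res :: "nat \<Rightarrow> nat list \<Rightarrow> btree list \<Rightarrow> nat \<Rightarrow> ires \<Rightarrow> ires" where
  "node_res m ks ts i res =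
     (case res of
        Done t \<Rightarrow> Done (Node ks (ts[i := t]))
      | Up l k r \<Rightarrow>
          (let ks' = take i ks @ k # drop i ks;
               ts' = take i ts @ l # r # drop (Suc i) ts in
           if length ks' \<le> 2*m then Done (Node ks' ts')
           else Up (Node (take m ks') (take (Suc m) ts')) (ks' ! m)
                   (Node (drop (Suc m) ks') (drop (Suc m) ts'))))"

function ins :: "nat \<Rightarrow> nat \<Rightarrow> btree \<Rightarrow> ires" where
  "ins m x (Leaf ks) = leaf_res m (insort x ks)"
| "ins m x (Node ks ts) =
     (if cidx ks x < length ts then node_res m ks ts (cidx ks x) (ins m x (ts ! cidx ks x))
      else Done (Node ks ts))"
  by pat_completeness auto
termination
  by (relation "measure (\<lambda>(m,x,t). size t)") (auto simp: size_nth_less)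

text \<open>Insertion of x into the B-tree t of order 2m+1 (new one-key root if the root splits).\<close>
definition binsert :: "nat \<Rightarrow> nat \<Rightarrow> btree \<Rightarrow> btree" where
  "binsert m x t = (case ins m x t of Done t' \<Rightarrow> t' | Up l k r \<Rightarrow> Node [k] [l, r])"

fun nleaves :: "btree \<Rightarrow> nat" where
  "nleaves (Leaf ks) = 1"
| "nleaves (Node ks ts) = sum_list (map nleaves ts)"

text \<open>0-based left-to-right index of the leaf into which x is placed.\<close>
function leaf_index :: "btree \<Rightarrow> nat \<Rightarrow> nat" where
  "leaf_index (Leaf ks) x = 0"
| "leaf_index (Node ks ts) x =
     (if cidx ks x < length ts
      then sum_list (map nleaves (take (cidx ks x) ts)) + leaf_index (ts ! cidx ks x) x else 0)"
  by pat_completeness auto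
termination
  by (relation "measure (\<lambda>(t,x). size t)") (auto simp: size_nth_less)

function leaf_keys :: "btree \<Rightarrow> nat \<Rightarrow> nat list" where
  "leaf_keys (Leaf ks) x = ks"
| "leaf_keys (Node ks ts) x =
     (if cidx ks x < length ts then leaf_keys (ts ! cidx ks x) x else [])"
  by pat_completeness auto
termination
  by (relation "measure (\<lambda>(t,x). size t)") (auto simp: size_nth_less)

fun btree_hist :: "nat \<Rightarrow> (nat \<Rightarrow> nat) \<Rightarrow> nat \<Rightarrow> btree" where
  "btree_hist m \<pi> 0 = Leaf []"
| "btree_hist m \<pi> (Suc k) = binsert m (\<pi> (Suc k)) (btree_hist m \<pi> k)"

text \<open>Median key of the leaf receiving pi i at time i: the (m+1)-th smallest among the leaf's
  keys together with pi i (this is the key pushed up when the leaf splits).\<close>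
definition median_key :: "nat \<Rightarrow> (nat \<Rightarrow> nat) \<Rightarrow> nat \<Rightarrow> nat" where
  "median_key m \<pi> i = insort (\<pi> i) (leaf_keys (btree_hist m \<pi> (i - 1)) (\<pi> i)) ! m"

text \<open>Ext is an unoccupied slot (external vertex); HV l cs is a vertex labelled l with
  child slots cs (two slots [left, right] at a branching, one slot otherwise).\<close>
datatype htree = Ext | HV nat "htree list"

definition branching_height :: "nat \<Rightarrow> nat \<Rightarrow> bool" where
  "branching_height m h \<longleftrightarrow> 2*m \<le> h \<and> (h - 2*m) mod (m+1) = 0"

definition arity :: "nat \<Rightarrow> nat \<Rightarrow> nat" where
  "arity m h = (if branching_height m h then 2 else 1)"

fun nexts :: "htree \<Rightarrow> nat" where
  "nexts Ext = 1"
| "nexts (HV l ts) = sum_list (map nexts ts)"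

text \<open>place m h t i l: put a vertex labelled l at the i-th (0-based) external vertex of t,
  where the root of t is at height h.\<close>
fun place :: "nat \<Rightarrow> nat \<Rightarrow> htree \<Rightarrow> nat \<Rightarrow> nat \<Rightarrow> htree"
and place_list :: "nat \<Rightarrow> nat \<Rightarrow> htree list \<Rightarrow> nat \<Rightarrow> nat \<Rightarrow> htree list" where
  "place m h Ext i l = HV l (replicate (arity m h) Ext)"
| "place m h (HV l' ts) i l = HV l' (place_list m (Suc h) ts i l)"
| "place_list m h [] i l = []"
| "place_list m h (t # ts) i l =
     (if i < nexts t then place m h t i l # ts else t # place_list m h ts (i - nexts t) l)"

text \<open>Phi: the historic tree of the history produced by the first k keys
  (hist 0 is the empty tree with a single external vertex; hist 1 is the one-vertex tree).\<close>
fun hist :: "nat \<Rightarrow> (nat \<Rightarrow> nat) \<Rightarrow> nat \<Rightarrow> htree" where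
  "hist m \<pi> 0 = Ext"
| "hist m \<pi> (Suc k) =
     place m 0 (hist m \<pi> k) (leaf_index (btree_hist m \<pi> k) (\<pi> (Suc k))) (Suc k)"

text \<open>Subtree at a path of child-slot indices (root = []).\<close>
fun subt :: "htree \<Rightarrow> nat list \<Rightarrow> htree" where
  "subt t [] = t"
| "subt Ext (c # p) = Ext"
| "subt (HV l ts) (c # p) = (if c < length ts then subt (ts ! c) p else Ext)"

definition vertex_at :: "htree \<Rightarrow> nat list \<Rightarrow> nat \<Rightarrow> bool" where
  "vertex_at H p l \<longleftrightarrow> (\<exists>ts. subt H p = HV l ts)"

definition is_branching :: "nat \<Rightarrow> htree \<Rightarrow> nat \<Rightarrow> bool" where
  "is_branching m H l \<longleftrightarrow> (\<exists>p. vertex_at H p l \<and> branching_height m (length p))"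

fun common_prefix :: "nat list \<Rightarrow> nat list \<Rightarrow> nat list" where
  "common_prefix (a # as) (b # bs) = (if a = b then a # common_prefix as bs else [])"
| "common_prefix _ _ = []"

text \<open>Vertex j is to the right of the branching i: j is in the subtree of the right child (slot 1)
  of i, or j is not a descendant of i and j is in the subtree of the right child of the lowest
  common ancestor w of i and j.\<close>
definition right_of :: "htree \<Rightarrow> nat \<Rightarrow> nat \<Rightarrow> bool" where
  "right_of H i j \<longleftrightarrow> (\<exists>p q. vertex_at H p i \<and> vertex_at H q j \<and>
      (prefix (p @ [1]) q \<or>
       (\<not> prefix p q \<and> prefix (common_prefix p q @ [1]) q)))"

end

theory Submission
  imports Defs
begin


datatype item = Lf "nat list" | Sep nat

fun flat :: "btree \<Rightarrow> item list" and flats :: "btree list \<Rightarrow> nat list \<Rightarrow> item list" where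
  "flat (Leaf ks) = [Lf ks]"
| "flat (Node ks ts) = flats ts ks"
| "flats [] ks = []"
| "flats [t] [] = flat t"
| "flats (t # ts) (k # ks) = flat t @ Sep k # flats ts ks"
| "flats (t # t' # ts) [] = []"

fun keysF :: "item list \<Rightarrow> nat list" where
  "keysF [] = []" | "keysF (Lf ks # F) = ks @ keysF F" | "keysF (Sep k # F) = k # keysF F"
fun lvs :: "item list \<Rightarrow> nat list list" where
  "lvs [] = []" | "lvs (Lf ks # F) = ks # lvs F" | "lvs (Sep k # F) = lvs F"
fun sps :: "item list \<Rightarrow> nat list" where
  "sps [] = []" | "sps (Lf ks # F) = sps F" | "sps (Sep k # F) = k # sps F"

lemma keysF_append[simp]: "keysF (A @ B) = keysF A @ keysF B"
  by (induction A rule: keysF.induct) auto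
lemma lvs_append[simp]: "lvs (A @ B) = lvs A @ lvs B"
  by (induction A rule: lvs.induct) auto
lemma sps_append[simp]: "sps (A @ B) = sps A @ sps B"
  by (induction A rule: sps.induct) auto
lemma sps_keys: "set (sps F) \<subseteq> set (keysF F)"
  by (induction F rule: sps.induct) auto

fun wfb :: "btree \<Rightarrow> bool" where
  "wfb (Leaf ks) = True"
| "wfb (Node ks ts) = (length ts = Suc (length ks) \<and> (\<forall>t\<in>set ts. wfb t))"

fun resF :: "ires \<Rightarrow> item list" where
  "resF (Done t) = flat t" | "resF (Up l k r) = flat l @ Sep k # flat r"
fun wfR :: "ires \<Rightarrow> bool" where
  "wfR (Done t) = wfb t" | "wfR (Up l k r) = (wfb l \<and> wfb r)"

lemma flats_append: "length ts1 = length ks1 \<Longrightarrow>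
   flats (ts1 @ ts2) (ks1 @ ks2) = flats ts1 ks1 @ flats ts2 ks2"
  by (induction ts1 ks1 rule: list_induct2) auto

lemma flats_Cons: "length us = length ks \<Longrightarrow>
   flats (t # us) ks = flat t @ (case ks of [] \<Rightarrow> [] | k # ks' \<Rightarrow> Sep k # flats us ks')"
  by (cases ks; cases us) auto

lemma flats_lvs: "length ts = Suc (length ks) \<Longrightarrow> lvs (flats ts ks) = concat (map (\<lambda>t. lvs (flat t)) ts)"
proof (induction ks arbitrary: ts)
  case Nil then show ?case by (cases ts) auto
next
  case (Cons k ks) then show ?case by (cases ts) auto
qed

lemma flats_sps_len: "length ts = Suc (length ks) \<Longrightarrow> length (sps (flats ts ks)) = sum_list (map (\<lambda>t. length (sps (flat t))) ts) + length ks"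
proof (induction ks arbitrary: ts)
  case Nil then show ?case by (cases ts) auto
next
  case (Cons k ks) then show ?case by (cases ts) auto
qed

lemma flats_keys: "length ts = Suc (length ks) \<Longrightarrow> set ks \<subseteq> set (keysF (flats ts ks))"
proof (induction ks arbitrary: ts)
  case Nil then show ?case by (cases ts) auto
next
  case (Cons k ks) then show ?case by (cases ts) auto
qed

lemma flats_sorted_ks: "length ts = Suc (length ks) \<Longrightarrow> sorted_wrt (<) (keysF (flats ts ks)) \<Longrightarrow> sorted_wrt (<) ks"
proof (induction ks arbitrary: ts)
  case Nil then show ?case by simp
next
  case (Cons k ks) then show ?case
    using flats_keys[of "tl ts" ks] by (cases ts) (auto simp: sorted_wrt_append)
qed

lemma wf_counts: "wfb t \<Longrightarrow> length (lvs (flat t)) = Suc (length (sps (flat t))) \<and> nleaves t = length (lvs (flat t))"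
proof (induction t)
  case (Leaf ks) then show ?case by simp
next
  case (Node ks ts)
  have h: "\<forall>t\<in>set ts. length (lvs (flat t)) = Suc (length (sps (flat t))) \<and> nleaves t = length (lvs (flat t))"
    using Node by auto
  have l: "length ts = Suc (length ks)" using Node by simp
  have "length (lvs (flats ts ks)) = sum_list (map (\<lambda>t. Suc (length (sps (flat t)))) ts)"
    using h by (simp add: flats_lvs[OF l] length_concat cong: map_cong)
  also have "\<dots> = sum_list (map (\<lambda>t. length (sps (flat t))) ts) + length ts"
    by (induction ts) auto
  finally show ?case using flats_sps_len[OF l] l h
    by (simp add: flats_lvs[OF l] length_concat cong: map_cong)
qed

lemma flats_lvs_eq: "length ts = length ks \<Longrightarrow> lvs (flats ts ks) = concat (map (\<lambda>t. lvs (flat t)) ts)"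
  by (induction ts ks rule: list_induct2) auto

lemma flats_sps_eq: "length ts = length ks \<Longrightarrow> length (sps (flats ts ks)) = sum_list (map (\<lambda>t. length (sps (flat t))) ts) + length ks"
  by (induction ts ks rule: list_induct2) auto

lemma gen_prefix: "sorted_wrt R xs \<Longrightarrow> (\<forall>a b. R a b \<longrightarrow> Q b \<longrightarrow> Q a) \<Longrightarrow> e < length xs \<Longrightarrow>
   Q (xs ! e) \<longleftrightarrow> e < length (filter Q xs)"
proof (induction xs arbitrary: e)
  case Nil then show ?case by simp
next
  case (Cons a xs)
  show ?case
  proof (cases "Q a")
    case True
    then show ?thesis using Cons by (cases e) auto
  next
    case False
    then have "filter Q xs = []" using Cons.prems(1,2) by (auto simp: filter_empty_conv)
    moreover have "\<not> Q ((a # xs) ! e)" using False Cons.prems by (cases e) (auto, meson nth_mem)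
    ultimately show ?thesis using False by simp
  qed
qed

lemma flats_split: "length ts = Suc (length ks) \<Longrightarrow> m < length ks \<Longrightarrow>
  flats ts ks = flats (take (Suc m) ts) (take m ks) @ Sep (ks ! m) # flats (drop (Suc m) ts) (drop (Suc m) ks)"
proof -
  assume l: "length ts = Suc (length ks)" and m: "m < length ks"
  have ks: "ks = take m ks @ ks ! m # drop (Suc m) ks" using m by (simp add: id_take_nth_drop)
  have ts: "ts = take m ts @ ts ! m # drop (Suc m) ts" using m l by (simp add: id_take_nth_drop)
  have "flats ts ks = flats (take m ts) (take m ks) @ flats (ts ! m # drop (Suc m) ts) (ks ! m # drop (Suc m) ks)"
    using flats_append[of "take m ts" "take m ks" "ts ! m # drop (Suc m) ts" "ks ! m # drop (Suc m) ks"] ks ts m l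
    by simp
  moreover have "take (Suc m) ts = take m ts @ [ts ! m]" using m l by (simp add: take_Suc_conv_app_nth)
  moreover have "flats (take m ts @ [ts ! m]) (take m ks @ []) = flats (take m ts) (take m ks) @ flats [ts ! m] []"
    using m l by (intro flats_append) simp
  ultimately show ?thesis by simp
qed

lemma flats_at: "length ts = Suc (length ks) \<Longrightarrow> c < length ts \<Longrightarrow>
   flats (take c ts @ t' # drop (Suc c) ts) ks = flats (take c ts) (take c ks) @ flat t' @
      (case drop c ks of [] \<Rightarrow> [] | k # ks' \<Rightarrow> Sep k # flats (drop (Suc c) ts) ks')"
proof -
  assume l: "length ts = Suc (length ks)" and c: "c < length ts"
  have "flats (take c ts @ t' # drop (Suc c) ts) (take c ks @ drop c ks) =
        flats (take c ts) (take c ks) @ flats (t' # drop (Suc c) ts) (drop c ks)"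
    using l c by (intro flats_append) simp
  moreover have "flats (t' # drop (Suc c) ts) (drop c ks) = flat t' @ (case drop c ks of [] \<Rightarrow> [] | k # ks' \<Rightarrow> Sep k # flats (drop (Suc c) ts) ks')"
    using l c by (intro flats_Cons) simp
  ultimately show ?thesis by simp
qed

lemma sum_list_Suc_map: "sum_list (map (\<lambda>t. Suc (f t)) xs) = sum_list (map f xs) + length xs"
  by (induction xs) auto

lemma sorted_last_less: "sorted_wrt (<) (X @ [k]) \<Longrightarrow> y \<in> set X \<Longrightarrow> y < k"
  by (auto simp: sorted_wrt_append)

lemma keysF_leaf_res: "length L > 0 \<Longrightarrow> keysF (resF (leaf_res m L)) = L"
  by (auto simp: leaf_res_def id_take_nth_drop[symmetric])

lemma wfR_leaf_res: "wfR (leaf_res m L)"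
  by (auto simp: leaf_res_def)

definition LOC :: "nat \<Rightarrow> nat \<Rightarrow> btree \<Rightarrow> bool" where
 "LOC m x t \<longleftrightarrow> (\<exists>A B. flat t = A @ Lf (leaf_keys t x) # B \<and>
     resF (ins m x t) = A @ resF (leaf_res m (insort x (leaf_keys t x))) @ B \<and>
     leaf_index t x = length (lvs A) \<and> length (lvs A) = length (sps A) \<and>
     (\<forall>k\<in>set (keysF A). k < x) \<and> (\<forall>k\<in>set (keysF B). x < k)) \<and> wfR (ins m x t)"

lemma loc: "wfb t \<Longrightarrow> sorted_wrt (<) (keysF (flat t)) \<Longrightarrow> x \<notin> set (keysF (flat t)) \<Longrightarrow> LOC m x t"
proof (induction m x t rule: ins.induct)
  case (1 m x ks)
  show ?case unfolding LOC_def by (rule conjI, rule exI[of _ "[]"], rule exI[of _ "[]"]) (auto simp: wfR_leaf_res)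
next
  case (2 m x ks ts)
  define c where "c = cidx ks x"
  have l: "length ts = Suc (length ks)" and wfs: "\<forall>t\<in>set ts. wfb t" using "2.prems" by auto
  have cle: "c \<le> length ks" unfolding c_def cidx_def by simp
  then have c: "c < length ts" using l by simp
  define Pre where "Pre = flats (take c ts) (take c ks)"
  define R where "R = (case drop c ks of [] \<Rightarrow> [] | k # ks' \<Rightarrow> Sep k # flats (drop (Suc c) ts) ks')"
  have at: "\<And>t'. flats (take c ts @ t' # drop (Suc c) ts) ks = Pre @ flat t' @ R"
    unfolding Pre_def R_def using flats_at[OF l c] by simp
  have fl: "flat (Node ks ts) = Pre @ flat (ts ! c) @ R"
    using at[of "ts ! c"] c by (simp add: id_take_nth_drop[symmetric])
  have so: "sorted_wrt (<) (keysF Pre @ keysF (flat (ts ! c)) @ keysF R)" using "2.prems"(2) fl by simp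
  have xn: "x \<notin> set (keysF Pre) \<and> x \<notin> set (keysF (flat (ts ! c))) \<and> x \<notin> set (keysF R)"
    using "2.prems"(3) fl by simp
  have sks: "sorted_wrt (<) ks" using flats_sorted_ks[OF l] "2.prems"(2) by simp
  have ksx: "\<And>j. j < length ks \<Longrightarrow> ks ! j < x \<longleftrightarrow> j < c"
    unfolding c_def cidx_def by (rule gen_prefix[OF sks]) auto
  have ksin: "set ks \<subseteq> set (keysF (flat (Node ks ts)))" using flats_keys[OF l] by simp
  have preL: "\<forall>k\<in>set (keysF Pre). k < x"
  proof (cases c)
    case 0 then show ?thesis by (simp add: Pre_def)
  next
    case (Suc c')
    have tk1: "take c ts = take c' ts @ [ts ! c']" using Suc c by (simp add: take_Suc_conv_app_nth)
    have tk2: "take c ks = take c' ks @ [ks ! c']" using Suc cle by (simp add: take_Suc_conv_app_nth)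
    have "Pre = flats (take c' ts) (take c' ks) @ flats [ts ! c'] [ks ! c']"
      unfolding Pre_def tk1 tk2 using c cle Suc by (intro flats_append) simp
    then have kp: "keysF Pre = (keysF (flats (take c' ts) (take c' ks)) @ keysF (flat (ts ! c'))) @ [ks ! c']" by simp
    have "sorted_wrt (<) (keysF Pre)" using so by (simp add: sorted_wrt_append)
    then have "\<forall>y\<in>set (keysF Pre). y \<le> ks ! c'" unfolding kp using sorted_last_less by fastforce
    moreover have "ks ! c' < x" using ksx[of c'] Suc cle by simp
    ultimately show ?thesis by fastforce
  qed
  have postR: "\<forall>k\<in>set (keysF R). x < k"
  proof (cases "c < length ks")
    case False
    then have "R = []" unfolding R_def using cle by simp
    then show ?thesis by simp
  next
    case True
    have dk: "drop c ks = ks ! c # drop (Suc c) ks" using True by (simp add: Cons_nth_drop_Suc)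
    then have kr: "keysF R = ks ! c # keysF (flats (drop (Suc c) ts) (drop (Suc c) ks))" unfolding R_def by simp
    have "x \<le> ks ! c" using ksx[of c] True by simp
    moreover have "ks ! c \<noteq> x" using xn kr by auto
    moreover have "sorted_wrt (<) (keysF R)" using so by (simp add: sorted_wrt_append)
    ultimately show ?thesis unfolding kr by fastforce
  qed
  have wfc: "wfb (ts ! c)" using wfs c by simp
  have soc: "sorted_wrt (<) (keysF (flat (ts ! c)))" using so by (simp add: sorted_wrt_append)
  have IH: "LOC m x (ts ! c)" using "2.IH" c xn wfc soc unfolding c_def by simp
  then obtain A' B' where A'B': "flat (ts ! c) = A' @ Lf (leaf_keys (ts ! c) x) # B'"
     "resF (ins m x (ts ! c)) = A' @ resF (leaf_res m (insort x (leaf_keys (ts ! c) x))) @ B'"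
     "leaf_index (ts ! c) x = length (lvs A')" "length (lvs A') = length (sps A')"
     "\<forall>k\<in>set (keysF A'). k < x" "\<forall>k\<in>set (keysF B'). x < k" and wfr: "wfR (ins m x (ts ! c))"
    unfolding LOC_def by blast
  have lk: "leaf_keys (Node ks ts) x = leaf_keys (ts ! c) x" using c unfolding c_def by simp
  have li: "leaf_index (Node ks ts) x = sum_list (map nleaves (take c ts)) + leaf_index (ts ! c) x"
    using c unfolding c_def by simp
  have wft: "\<forall>t\<in>set (take c ts). wfb t" using wfs by (meson in_set_takeD)
  have lvsPre: "length (lvs Pre) = sum_list (map nleaves (take c ts))"
    unfolding Pre_def using c cle wft
    by (simp add: flats_lvs_eq length_concat wf_counts cong: map_cong)
  have spsPre: "length (sps Pre) = sum_list (map nleaves (take c ts))"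
  proof -
    have "length (sps Pre) = sum_list (map (\<lambda>t. length (sps (flat t))) (take c ts)) + length (take c ts)"
      unfolding Pre_def using c cle by (simp add: flats_sps_eq)
    also have "\<dots> = sum_list (map (\<lambda>t. Suc (length (sps (flat t)))) (take c ts))"
      by (simp add: sum_list_Suc_map)
    also have "\<dots> = sum_list (map nleaves (take c ts))"
      using wft by (intro arg_cong[where f=sum_list] map_cong) (auto simp: wf_counts)
    finally show ?thesis .
  qed
  have res: "resF (ins m x (Node ks ts)) = Pre @ resF (ins m x (ts ! c)) @ R \<and> wfR (ins m x (Node ks ts))"
  proof (cases "ins m x (ts ! c)")
    case (Done t'')
    have "ins m x (Node ks ts) = Done (Node ks (ts[c := t'']))"
      using c Done unfolding c_def by (simp add: node_res_def)
    moreover have "ts[c := t''] = take c ts @ t'' # drop (Suc c) ts" using c by (simp add: upd_conv_take_nth_drop)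
    moreover have "wfb t''" using wfr Done by simp
    ultimately show ?thesis using at Done l wfs c by (auto dest: in_set_takeD in_set_dropD)
  next
    case (Up lt k rt)
    define ks' where "ks' = take c ks @ k # drop c ks"
    define ts' where "ts' = take c ts @ lt # rt # drop (Suc c) ts"
    have l': "length ts' = Suc (length ks')" unfolding ks'_def ts'_def using l c by simp
    have fl': "flats ts' ks' = Pre @ flat lt @ Sep k # flat rt @ R"
    proof -
      have "flats ts' (take c ks @ k # drop c ks) = Pre @ flats (lt # rt # drop (Suc c) ts) (k # drop c ks)"
        unfolding ts'_def Pre_def using c cle by (intro flats_append) simp
      moreover have "flats (rt # drop (Suc c) ts) (drop c ks) = flat rt @ R"
        unfolding R_def using l c by (intro flats_Cons) simp
      ultimately show ?thesis unfolding ks'_def by simp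
    qed
    have wfb': "\<forall>t\<in>set ts'. wfb t" using wfs wfr Up unfolding ts'_def by (auto dest: in_set_takeD in_set_dropD)
    have ins: "ins m x (Node ks ts) = (if length ks' \<le> 2*m then Done (Node ks' ts')
           else Up (Node (take m ks') (take (Suc m) ts')) (ks' ! m) (Node (drop (Suc m) ks') (drop (Suc m) ts')))"
      using c Up unfolding c_def ks'_def ts'_def by (simp add: node_res_def Let_def)
    show ?thesis
    proof (cases "length ks' \<le> 2*m")
      case True then show ?thesis using ins fl' Up l' wfb' by simp
    next
      case False
      then have mk: "m < length ks'" by simp
      have "flats ts' ks' = flats (take (Suc m) ts') (take m ks') @ Sep (ks' ! m) # flats (drop (Suc m) ts') (drop (Suc m) ks')"
        using flats_split[OF l' mk] .
      moreover have "wfb (Node (take m ks') (take (Suc m) ts')) \<and> wfb (Node (drop (Suc m) ks') (drop (Suc m) ts'))"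
        using l' mk wfb' by (auto dest: in_set_takeD in_set_dropD)
      ultimately show ?thesis using ins False fl' Up by simp
    qed
  qed
  show ?case unfolding LOC_def
  proof (intro conjI exI)
    show "flat (Node ks ts) = (Pre @ A') @ Lf (leaf_keys (Node ks ts) x) # (B' @ R)"
      using fl A'B'(1) lk by simp
    show "resF (ins m x (Node ks ts)) = (Pre @ A') @ resF (leaf_res m (insort x (leaf_keys (Node ks ts) x))) @ (B' @ R)"
      using res A'B'(2) lk by simp
    show "leaf_index (Node ks ts) x = length (lvs (Pre @ A'))" using li lvsPre A'B'(3) by simp
    show "length (lvs (Pre @ A')) = length (sps (Pre @ A'))" using lvsPre spsPre A'B'(4) by simp
    show "\<forall>k\<in>set (keysF (Pre @ A')). k < x" using preL A'B'(5) by auto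
    show "\<forall>k\<in>set (keysF (B' @ R)). x < k" using postR A'B'(6) by auto
    show "wfR (ins m x (Node ks ts))" using res by simp
  qed
qed




fun extp :: "htree \<Rightarrow> nat list list" and extpl :: "nat \<Rightarrow> htree list \<Rightarrow> nat list list" where
  "extp Ext = [[]]"
| "extp (HV l ts) = extpl 0 ts"
| "extpl c [] = []"
| "extpl c (t # ts) = map ((#) c) (extp t) @ extpl (Suc c) ts"

fun D :: "nat list \<Rightarrow> nat list \<Rightarrow> bool" where
  "D (a # r) (b # s) = (a < b \<or> (a = b \<and> D r s))"
| "D _ _ = False"

lemma D_trans: "D r s \<Longrightarrow> D s t \<Longrightarrow> D r t"
proof (induction r arbitrary: s t)
  case Nil then show ?case by simp
next
  case (Cons a r) then show ?case by (cases s; cases t) auto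
qed

lemma D_irrefl: "\<not> D r r"
  by (induction r) auto

lemma D_asym: "D r s \<Longrightarrow> \<not> D s r"
  using D_trans D_irrefl by blast

lemma D_app: "D r s \<Longrightarrow> D (r @ x) (s @ y)"
proof (induction r arbitrary: s)
  case Nil then show ?case by simp
next
  case (Cons a r) then show ?case by (cases s) auto
qed

lemma D_snoc: "\<not> (prefix r s \<and> r \<noteq> s) \<Longrightarrow> D (r @ [c]) s = D r s"
proof (induction r arbitrary: s)
  case Nil then show ?case by (cases s) auto
next
  case (Cons a r) then show ?case by (cases s) auto
qed

lemma cond_iff: "(\<forall>c\<in>set p. c < 2) \<Longrightarrow> (\<forall>c\<in>set q. c < 2) \<Longrightarrow> \<not> prefix q p \<Longrightarrow>
  (prefix (p @ [1]) q \<or> (\<not> prefix p q \<and> prefix (common_prefix p q @ [1]) q)) \<longleftrightarrow> \<not> D q (p @ [1])"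
proof (induction p arbitrary: q)
  case Nil then show ?case by (cases q) auto
next
  case (Cons a p) then show ?case by (cases q) auto
qed

lemma extp_len: "length (extp t) = nexts t" and extpl_len: "length (extpl c ts) = sum_list (map nexts ts)"
  by (induction t and c ts rule: extp_extpl.induct) auto

lemma extpl_heads: "r \<in> set (extpl c ts) \<Longrightarrow> \<exists>a r'. r = a # r' \<and> c \<le> a \<and> a < c + length ts \<and> r' \<in> set (extp (ts ! (a - c)))"
proof (induction ts arbitrary: c)
  case Nil then show ?case by simp
next
  case (Cons t ts)
  show ?case
  proof (cases "r \<in> set (map ((#) c) (extp t))")
    case True then show ?thesis by auto
  next
    case False
    then have "r \<in> set (extpl (Suc c) ts)" using Cons.prems by simp
    from Cons.IH[OF this] obtain a r' where "r = a # r'" "Suc c \<le> a" "a < Suc c + length ts" "r' \<in> set (extp (ts ! (a - Suc c)))" by blast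
    then show ?thesis by (intro exI[of _ a] exI[of _ r']) (auto simp: nth_Cons' Suc_diff_Suc)
  qed
qed

lemma extp_sorted: "sorted_wrt D (extp t)" and "sorted_wrt D (extpl c ts)"
proof (induction t and c ts rule: extp_extpl.induct)
  case (4 c t ts)
  have "\<forall>r\<in>set (map ((#) c) (extp t)). \<forall>s\<in>set (extpl (Suc c) ts). D r s"
    using extpl_heads[of _ "Suc c" ts] by fastforce
  moreover have "sorted_wrt D (map ((#) c) (extp t))" using 4 by (simp add: sorted_wrt_map)
  ultimately show ?case using 4 by (simp add: sorted_wrt_append)
qed auto

lemma subt_Ext[simp]: "subt Ext q = Ext"
  by (cases q) auto

lemma subt_append: "subt t (r @ s) = subt (subt t r) s"
proof (induction t r rule: subt.induct)
  case (3 l ts c p) then show ?case by auto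
qed auto

lemma extp_Ext: "r \<in> set (extp t) \<Longrightarrow> subt t r = Ext" and "r \<in> set (extpl c ts) \<Longrightarrow> (\<exists>a r'. r = a # r' \<and> c \<le> a \<and> a < c + length ts \<and> subt (ts ! (a - c)) r' = Ext)"
proof (induction t and c ts arbitrary: r and r rule: extp_extpl.induct)
  case (2 l ts)
  then obtain a r' where "r = a # r'" "a < length ts" "subt (ts ! a) r' = Ext" by fastforce
  then show ?case by simp
next
  case (4 c t ts)
  show ?case
  proof (cases "r \<in> set (map ((#) c) (extp t))")
    case True then show ?thesis using 4 by auto
  next
    case False
    then have "r \<in> set (extpl (Suc c) ts)" using "4.prems" by simp
    from "4.IH"(2)[OF this] obtain a r' where "r = a # r'" "Suc c \<le> a" "a < Suc c + length ts" "subt (ts ! (a - Suc c)) r' = Ext" by blast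
    then show ?thesis by (intro exI[of _ a] exI[of _ r']) (auto simp: nth_Cons' Suc_diff_Suc)
  qed
qed auto

lemma place_list_len: "length (place_list m h ts e l) = length ts"
  by (induction ts arbitrary: e) auto

definition lab :: "htree \<Rightarrow> nat list \<Rightarrow> nat option" where
  "lab t q = (case subt t q of Ext \<Rightarrow> None | HV l _ \<Rightarrow> Some l)"

lemma vertex_at_lab: "vertex_at H p l \<longleftrightarrow> lab H p = Some l"
  by (auto simp: vertex_at_def lab_def split: htree.splits)

lemma extpl_rep: "extpl c (replicate k Ext) = map (\<lambda>c'. [c']) [c..<c+k]"
proof (induction k arbitrary: c)
  case 0 then show ?case by simp
next
  case (Suc k) then show ?case by (simp add: upt_rec)
qed

lemma place_extp:
 "e < nexts t \<Longrightarrow> extp (place m h t e l) = take e (extp t) @ map (\<lambda>c. extp t ! e @ [c]) [0..<arity m (h + length (extp t ! e))] @ drop (Suc e) (extp t)"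
 and "e < sum_list (map nexts ts) \<Longrightarrow> 0 < h \<Longrightarrow> \<forall>c. extpl c (place_list m h ts e l) = take e (extpl c ts) @ map (\<lambda>c'. extpl c ts ! e @ [c']) [0..<arity m (h + length (extpl c ts ! e) - 1)] @ drop (Suc e) (extpl c ts)"
proof (induction m h t e l and m h ts e l rule: place_place_list.induct)
  case (1 m h i l)
  then show ?case by (simp add: extpl_rep)
next
  case (2 m h l' ts i l)
  then show ?case by simp
next
  case (3 m h i l)
  then show ?case by simp
next
  case (4 m h t ts i l)
  show ?case
  proof (intro allI)
    fix c
    show "extpl c (place_list m h (t # ts) i l) = take i (extpl c (t # ts)) @ map (\<lambda>c'. extpl c (t # ts) ! i @ [c']) [0..<arity m (h + length (extpl c (t # ts) ! i) - 1)] @ drop (Suc i) (extpl c (t # ts))"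
    proof (cases "i < nexts t")
      case True
      have len: "length (extp t) = nexts t" by (simp add: extp_len)
      have "extp t ! i \<noteq> [] \<or> True" by simp
      show ?thesis using True "4.IH"(1)[OF True True] len 4(4)
        by (simp add: take_append drop_append nth_append take_map drop_map)
    next
      case False
      have len: "length (extp t) = nexts t" by (simp add: extp_len)
      have lt: "i - nexts t < sum_list (map nexts ts)" using "4.prems" False by simp
      have lt2: "i - nexts t < length (extpl (Suc c) ts)" using lt by (simp add: extpl_len)
      have ne: "extpl (Suc c) ts ! (i - nexts t) \<noteq> []"
        using extpl_heads[OF nth_mem[OF lt2]] by auto
      show ?thesis using False "4.IH"(2)[OF False lt 4(4)] len ne
        by (simp add: take_append drop_append nth_append Suc_diff_le not_less)
    qed
  qed
qed

lemma lab_Nil: "lab (HV l ts) [] = Some l" by (simp add: lab_def)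
lemma lab_Cons: "lab (HV l ts) (c # q) = (if c < length ts then lab (ts ! c) q else None)"
  by (simp add: lab_def)
lemma lab_Ext: "lab Ext q = None" by (simp add: lab_def)

lemma extpl_nth_heads: "e < length (extpl c ts) \<Longrightarrow> \<exists>a r'. extpl c ts ! e = a # r' \<and> c \<le> a \<and> a < c + length ts"
  using extpl_heads[OF nth_mem] by blast

lemma place_lab:
 "e < nexts t \<Longrightarrow> lab (place m h t e l) q = (if q = extp t ! e then Some l else lab t q)"
 and "e < sum_list (map nexts ts) \<Longrightarrow> \<forall>c c' q. c' < length ts \<longrightarrow> lab (place_list m h ts e l ! c') q = (if (c + c') # q = extpl c ts ! e then Some l else lab (ts ! c') q)"
proof (induction m h t e l and m h ts e l arbitrary: q and rule: place_place_list.induct)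
  case (1 m h i l)
  then show ?case by (cases q) (auto simp: lab_Nil lab_Cons lab_Ext)
next
  case (2 m h l' ts i l)
  have lt: "i < length (extpl 0 ts)" using "2.prems" by (simp add: extpl_len)
  obtain a r' where ar: "extpl 0 ts ! i = a # r'" "a < length ts" using extpl_nth_heads[OF lt] by auto
  show ?case
  proof (cases q)
    case Nil then show ?thesis using ar by (simp add: lab_Nil)
  next
    case (Cons c q')
    have IH: "\<And>c' q. c' < length ts \<Longrightarrow> lab (place_list m (Suc h) ts i l ! c') q = (if c' # q = extpl 0 ts ! i then Some l else lab (ts ! c') q)"
    proof -
      fix c' q assume "c' < length ts"
      have "\<forall>c c' q. c' < length ts \<longrightarrow> lab (place_list m (Suc h) ts i l ! c') q = (if (c + c') # q = extpl c ts ! i then Some l else lab (ts ! c') q)"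
        using "2.IH" "2.prems" by simp
      then show "lab (place_list m (Suc h) ts i l ! c') q = (if c' # q = extpl 0 ts ! i then Some l else lab (ts ! c') q)"
        using \<open>c' < length ts\<close> by (metis add_0)
    qed
    show ?thesis using Cons IH ar
      by (auto simp: lab_Cons place_list_len)
  qed
next
  case (3 m h i l)
  then show ?case by simp
next
  case (4 m h t ts i l)
  have len: "length (extp t) = nexts t" by (simp add: extp_len)
  show ?case
  proof (intro allI impI)
    fix c c' q
    assume c': "c' < length (t # ts)"
    show "lab (place_list m h (t # ts) i l ! c') q = (if (c + c') # q = extpl c (t # ts) ! i then Some l else lab ((t # ts) ! c') q)"
    proof (cases "i < nexts t")
      case True
      have e: "extpl c (t # ts) ! i = c # extp t ! i" using True len by (simp add: nth_append)
      show ?thesis using True "4.IH"(1)[OF True True] e by (cases c') auto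
    next
      case False
      have lt: "i - nexts t < sum_list (map nexts ts)" using "4.prems" False by simp
      have lt2: "i - nexts t < length (extpl (Suc c) ts)" using lt by (simp add: extpl_len)
      have e: "extpl c (t # ts) ! i = extpl (Suc c) ts ! (i - nexts t)" using False len by (simp add: nth_append)
      obtain a r' where ar: "extpl (Suc c) ts ! (i - nexts t) = a # r'" "Suc c \<le> a" using extpl_nth_heads[OF lt2] by auto
      show ?thesis
      proof (cases c')
        case 0 then show ?thesis using False e ar by auto
      next
        case (Suc k)
        have "lab (place_list m h ts (i - nexts t) l ! k) q = (if (Suc c + k) # q = extpl (Suc c) ts ! (i - nexts t) then Some l else lab (ts ! k) q)"
          using "4.IH"(2)[OF False lt, rule_format, of k q "Suc c"] Suc c' by simp
        then show ?thesis using False e Suc by simp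
      qed
    qed
  qed
qed





definition cnt :: "nat \<Rightarrow> nat \<Rightarrow> nat" where
  "cnt m h = (if h \<le> 2*m then h else m + (h - 2*m - 1) mod (m+1))"

lemma cnt_le: "cnt m h \<le> 2*m"
proof -
  have "(h - 2*m - 1) mod (m+1) \<le> m" using mod_less_divisor[of "m+1" "h - 2*m - 1"] by simp
  then show ?thesis unfolding cnt_def by auto
qed

lemma cnt_facts: assumes "m \<ge> 1"
  shows "branching_height m h \<longleftrightarrow> cnt m h = 2*m"
    and "\<not> branching_height m h \<Longrightarrow> cnt m (Suc h) = Suc (cnt m h)"
    and "branching_height m h \<Longrightarrow> cnt m (Suc h) = m"
proof -
  have "h < 2*m \<or> h = 2*m \<or> h = 2*m + 1 + (h - 2*m - 1)" by linarith
  then consider "h < 2*m" | "h = 2*m" | d where "h = 2*m + 1 + d" by blast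
  then have "(branching_height m h \<longleftrightarrow> cnt m h = 2*m) \<and> (\<not> branching_height m h \<longrightarrow> cnt m (Suc h) = Suc (cnt m h))
     \<and> (branching_height m h \<longrightarrow> cnt m (Suc h) = m)"
  proof cases
    case 1
    have "\<not> branching_height m h" "cnt m h = h" "cnt m (Suc h) = Suc h" using 1 by (auto simp: branching_height_def cnt_def)
    then show ?thesis using 1 by simp
  next
    case 2
    have "branching_height m h" using 2 by (simp add: branching_height_def)
    moreover have "cnt m h = 2*m" using 2 by (simp add: cnt_def)
    moreover have "cnt m (Suc h) = m" using 2 by (simp add: cnt_def)
    ultimately show ?thesis by simp
  next
    case 3
    have e1: "h - 2*m = Suc d" using 3 by simp
    have e2: "h - 2*m - 1 = d" using 3 by simp
    have e3: "Suc h - 2*m - 1 = Suc d" using 3 by simp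
    define r where "r = d mod (m+1)"
    have lt: "r \<le> m" unfolding r_def using mod_less_divisor[of "m+1" d] by simp
    have ms: "Suc d mod (m+1) = (if r = m then 0 else Suc r)" unfolding r_def using mod_Suc[of d "m+1"] by simp
    have bh: "branching_height m h \<longleftrightarrow> r = m" unfolding branching_height_def e1 using ms 3 by auto
    have c1: "cnt m h = m + r" unfolding cnt_def e2 r_def using 3 by simp
    have c2: "cnt m (Suc h) = m + (if r = m then 0 else Suc r)" unfolding cnt_def e3 using 3 ms by simp
    show ?thesis using bh c1 c2 lt by auto
  qed
  then show "branching_height m h \<longleftrightarrow> cnt m h = 2*m"
    and "\<not> branching_height m h \<Longrightarrow> cnt m (Suc h) = Suc (cnt m h)"
    and "branching_height m h \<Longrightarrow> cnt m (Suc h) = m" by blast+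
qed

lemma step_loc: "wfb T \<Longrightarrow> sorted_wrt (<) (keysF (flat T)) \<Longrightarrow> x \<notin> set (keysF (flat T)) \<Longrightarrow>
  \<exists>A B. flat T = A @ Lf (leaf_keys T x) # B \<and> flat (binsert m x T) = A @ resF (leaf_res m (insort x (leaf_keys T x))) @ B \<and>
   leaf_index T x = length (lvs A) \<and> length (lvs A) = length (sps A) \<and>
   (\<forall>k\<in>set (keysF A). k < x) \<and> (\<forall>k\<in>set (keysF B). x < k) \<and> wfb (binsert m x T)"
proof -
  assume a: "wfb T" "sorted_wrt (<) (keysF (flat T))" "x \<notin> set (keysF (flat T))"
  have "LOC m x T" using loc[OF a] .
  then obtain A B where AB: "flat T = A @ Lf (leaf_keys T x) # B"
     "resF (ins m x T) = A @ resF (leaf_res m (insort x (leaf_keys T x))) @ B"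
     "leaf_index T x = length (lvs A)" "length (lvs A) = length (sps A)"
     "\<forall>k\<in>set (keysF A). k < x" "\<forall>k\<in>set (keysF B). x < k" and w: "wfR (ins m x T)"
    unfolding LOC_def by (elim conjE exE) (intro that, assumption+)
  have "flat (binsert m x T) = resF (ins m x T) \<and> wfb (binsert m x T)"
    using w by (cases "ins m x T") (simp_all add: binsert_def)
  then show ?thesis using AB by (intro exI[of _ A] exI[of _ B]) simp
qed


definition INV :: "nat \<Rightarrow> (nat \<Rightarrow> nat) \<Rightarrow> nat \<Rightarrow> bool" where
  "INV m \<pi> t \<longleftrightarrow> wfb (btree_hist m \<pi> t) \<and> sorted_wrt (<) (keysF (flat (btree_hist m \<pi> t))) \<and>
     set (keysF (flat (btree_hist m \<pi> t))) = \<pi> ` {1..t} \<and>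
     map length (lvs (flat (btree_hist m \<pi> t))) = map (\<lambda>r. cnt m (length r)) (extp (hist m \<pi> t)) \<and>
     (\<forall>r\<in>set (extp (hist m \<pi> t)). \<forall>c\<in>set r. c < 2)"

definition STEP :: "nat \<Rightarrow> (nat \<Rightarrow> nat) \<Rightarrow> nat \<Rightarrow> item list \<Rightarrow> item list \<Rightarrow> bool" where
  "STEP m \<pi> t A B \<longleftrightarrow> (let T = btree_hist m \<pi> t; x = \<pi> (Suc t); lk = leaf_keys T x; e = leaf_index T x;
      P = extp (hist m \<pi> t) in
    flat T = A @ Lf lk # B \<and> flat (btree_hist m \<pi> (Suc t)) = A @ resF (leaf_res m (insort x lk)) @ B \<and>
    e = length (lvs A) \<and> length (lvs A) = length (sps A) \<and>
    (\<forall>k\<in>set (keysF A). k < x) \<and> (\<forall>k\<in>set (keysF B). x < k) \<and> wfb (btree_hist m \<pi> (Suc t)) \<and>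
    x \<notin> set (keysF (flat T)) \<and> e < length P \<and>
    extp (hist m \<pi> (Suc t)) = take e P @ map (\<lambda>c. P ! e @ [c]) [0..<arity m (length (P ! e))] @ drop (Suc e) P \<and>
    length lk = cnt m (length (P ! e)) \<and>
    (\<forall>q. lab (hist m \<pi> (Suc t)) q = (if q = P ! e then Some (Suc t) else lab (hist m \<pi> t) q)))"

lemma map_eq_parts: "map f (X @ y # Y) = map g P \<Longrightarrow> length X = e \<Longrightarrow>
   map f X = map g (take e P) \<and> f y = g (P ! e) \<and> map f Y = map g (drop (Suc e) P) \<and> e < length P"
proof -
  assume h: "map f (X @ y # Y) = map g P" and l: "length X = e"
  have lp: "length P = length X + Suc (length Y)" using arg_cong[OF h, of length] by simp
  have "take e (map f (X @ y # Y)) = take e (map g P)" using h by simp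
  moreover have "(map f (X @ y # Y)) ! e = (map g P) ! e" using h by simp
  moreover have "drop (Suc e) (map f (X @ y # Y)) = drop (Suc e) (map g P)" using h by simp
  ultimately show ?thesis using l lp by (simp add: take_map drop_map nth_append)
qed

lemma step_data: assumes inv: "INV m \<pi> t" and x: "\<pi> (Suc t) \<notin> \<pi> ` {1..t}"
  shows "\<exists>A B. STEP m \<pi> t A B"
proof -
  define T where "T = btree_hist m \<pi> t"
  define x where "x = \<pi> (Suc t)"
  define lk where "lk = leaf_keys T x"
  define e where "e = leaf_index T x"
  define P where "P = extp (hist m \<pi> t)"
  have I: "wfb T" "sorted_wrt (<) (keysF (flat T))" "set (keysF (flat T)) = \<pi> ` {1..t}"
     "map length (lvs (flat T)) = map (\<lambda>r. cnt m (length r)) P"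
    using inv unfolding INV_def T_def P_def by auto
  have xn: "x \<notin> set (keysF (flat T))" using I(3) x unfolding x_def by simp
  obtain A B where AB: "flat T = A @ Lf lk # B" "flat (binsert m x T) = A @ resF (leaf_res m (insort x lk)) @ B"
   "e = length (lvs A)" "length (lvs A) = length (sps A)"
   "\<forall>k\<in>set (keysF A). k < x" "\<forall>k\<in>set (keysF B). x < k" "wfb (binsert m x T)"
    using step_loc[OF I(1,2) xn, of m] unfolding lk_def[symmetric] e_def[symmetric] by (elim exE conjE) (rule that)
  have mp: "map length (lvs A) = map (\<lambda>r. cnt m (length r)) (take e P) \<and> length lk = cnt m (length (P ! e)) \<and>
      map length (lvs B) = map (\<lambda>r. cnt m (length r)) (drop (Suc e) P) \<and> e < length P"
    using map_eq_parts[of length "lvs A" lk "lvs B" "\<lambda>r. cnt m (length r)" P e] I(4) AB(1,3) by simp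
  have ne: "e < nexts (hist m \<pi> t)" using mp by (simp add: P_def extp_len)
  have hs: "hist m \<pi> (Suc t) = place m 0 (hist m \<pi> t) e (Suc t)"
    unfolding e_def T_def x_def by simp
  have bs: "btree_hist m \<pi> (Suc t) = binsert m x T" unfolding T_def x_def by simp
  have pe: "extp (hist m \<pi> (Suc t)) = take e P @ map (\<lambda>c. P ! e @ [c]) [0..<arity m (length (P ! e))] @ drop (Suc e) P"
    unfolding hs P_def using place_extp(1)[OF ne, of m 0 "Suc t"] by simp
  have pl: "\<forall>q. lab (hist m \<pi> (Suc t)) q = (if q = P ! e then Some (Suc t) else lab (hist m \<pi> t) q)"
    unfolding hs P_def using place_lab(1)[OF ne, of m 0 "Suc t"] by simp
  have fl: "flat (btree_hist m \<pi> (Suc t)) = A @ resF (leaf_res m (insort x lk)) @ B" "wfb (btree_hist m \<pi> (Suc t))"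
    unfolding bs using AB by auto
  have "STEP m \<pi> t A B"
    unfolding STEP_def Let_def T_def[symmetric] x_def[symmetric] lk_def[symmetric] e_def[symmetric] P_def[symmetric]
    using AB(1,3,4,5,6) xn mp fl pe pl by blast
  then show ?thesis by blast
qed


lemma inj_new: assumes inj: "inj_on \<pi> {1..n}" and t: "Suc t \<le> n" shows "\<pi> (Suc t) \<notin> \<pi> ` {1..t}"
proof
  assume "\<pi> (Suc t) \<in> \<pi> ` {1..t}"
  then obtain y where y: "y \<in> {1..t}" "\<pi> y = \<pi> (Suc t)" by (auto simp del: atLeastAtMost_iff)
  have "y = Suc t" using inj_onD[OF inj y(2)] y(1) t by simp
  then show False using y(1) by simp
qed

lemma lvs_leaf_res: "lvs (resF (leaf_res m L)) = (if length L \<le> 2*m then [L] else [take m L, drop (Suc m) L])"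
  by (simp add: leaf_res_def)

lemma arity_le: "arity m h \<le> 2" by (simp add: arity_def)

lemma inv_step: assumes m: "m \<ge> 1" and inv: "INV m \<pi> t" and st: "STEP m \<pi> t A B"
  shows "INV m \<pi> (Suc t)"
proof -
  define T where "T = btree_hist m \<pi> t"
  define x where "x = \<pi> (Suc t)"
  define lk where "lk = leaf_keys T x"
  define e where "e = leaf_index T x"
  define P where "P = extp (hist m \<pi> t)"
  define L where "L = insort x lk"
  have I: "wfb T" "sorted_wrt (<) (keysF (flat T))" "set (keysF (flat T)) = \<pi> ` {1..t}"
     "map length (lvs (flat T)) = map (\<lambda>r. cnt m (length r)) P" "\<forall>r\<in>set P. \<forall>c\<in>set r. c < 2"
    using inv unfolding INV_def T_def P_def by auto
  have S: "flat T = A @ Lf lk # B" "flat (btree_hist m \<pi> (Suc t)) = A @ resF (leaf_res m L) @ B"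
    "e = length (lvs A)" "(\<forall>k\<in>set (keysF A). k < x)" "(\<forall>k\<in>set (keysF B). x < k)" "wfb (btree_hist m \<pi> (Suc t))"
    "x \<notin> set (keysF (flat T))" "e < length P"
    "extp (hist m \<pi> (Suc t)) = take e P @ map (\<lambda>c. P ! e @ [c]) [0..<arity m (length (P ! e))] @ drop (Suc e) P"
    "length lk = cnt m (length (P ! e))"
    using st unfolding STEP_def Let_def T_def[symmetric] x_def[symmetric] lk_def[symmetric] e_def[symmetric] P_def[symmetric] L_def
    by auto
  have Lk: "keysF (resF (leaf_res m L)) = L" unfolding L_def by (rule keysF_leaf_res) simp
  have so_old: "sorted_wrt (<) (keysF A @ lk @ keysF B)" using I(2) S(1) by simp
  have slk: "sorted_wrt (<) lk" using so_old by (simp add: sorted_wrt_append)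
  have xlk: "x \<notin> set lk" using S(7) S(1) by simp
  have sL: "sorted_wrt (<) L" using slk xlk unfolding L_def by (simp add: strict_sorted_iff sorted_insort distinct_insort)
  have sortnew: "sorted_wrt (<) (keysF A @ L @ keysF B)"
    using so_old sL S(4,5) unfolding L_def by (auto simp: sorted_wrt_append set_insort_key)
  have keysnew: "set (keysF A @ L @ keysF B) = \<pi> ` {1..Suc t}"
  proof -
    have "set (keysF A @ L @ keysF B) = insert x (set (keysF (flat T)))" using S(1) unfolding L_def by (auto simp: set_insort_key)
    also have "\<dots> = \<pi> ` {1..Suc t}" using I(3) unfolding x_def by (auto simp: atLeastAtMostSuc_conv)
    finally show ?thesis .
  qed
  have mp: "map length (lvs A) = map (\<lambda>r. cnt m (length r)) (take e P) \<and>
      map length (lvs B) = map (\<lambda>r. cnt m (length r)) (drop (Suc e) P)"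
    using map_eq_parts[of length "lvs A" lk "lvs B" "\<lambda>r. cnt m (length r)" P e] I(4) S(1,3) by simp
  have mid: "map length (lvs (resF (leaf_res m L))) = map (\<lambda>r. cnt m (length r)) (map (\<lambda>c. P ! e @ [c]) [0..<arity m (length (P ! e))])"
  proof (cases "branching_height m (length (P ! e))")
    case True
    then have "length lk = 2*m" using S(10) cnt_facts(1)[OF m] by simp
    then have "length L = Suc (2*m)" unfolding L_def by (simp add: length_insort)
    moreover have "arity m (length (P ! e)) = 2" using True by (simp add: arity_def)
    ultimately show ?thesis using cnt_facts(3)[OF m True] by (simp add: lvs_leaf_res upt_rec)
  next
    case False
    then have "length lk < 2*m" using S(10) cnt_facts(1)[OF m] cnt_le[of m] by (metis le_neq_implies_less)
    then have "length L \<le> 2*m" "length L = Suc (length lk)" unfolding L_def by (simp_all add: length_insort)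
    moreover have "arity m (length (P ! e)) = 1" using False by (simp add: arity_def)
    ultimately show ?thesis using cnt_facts(2)[OF m False] S(10) by (simp add: lvs_leaf_res)
  qed
  have comp: "\<forall>r\<in>set (extp (hist m \<pi> (Suc t))). \<forall>c\<in>set r. c < 2"
  proof -
    have "P ! e \<in> set P" using S(8) by simp
    then have "\<forall>c\<in>set (P ! e). c < 2" using I(5) by blast
    moreover have "\<forall>c < arity m (length (P ! e)). c < 2" using arity_le[of m "length (P ! e)"] by auto
    ultimately show ?thesis unfolding S(9) using I(5) by (auto dest: in_set_takeD in_set_dropD)
  qed
  have k2: "keysF (flat (btree_hist m \<pi> (Suc t))) = keysF A @ L @ keysF B"
    unfolding S(2) using Lk by (simp del: btree_hist.simps)
  have l2: "map length (lvs (flat (btree_hist m \<pi> (Suc t)))) = map (\<lambda>r. cnt m (length r)) (extp (hist m \<pi> (Suc t)))"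
    unfolding S(2) S(9) using mp mid by (simp del: btree_hist.simps hist.simps)
  show ?thesis unfolding INV_def k2 l2
    using S(6) sortnew keysnew comp by blast
qed

lemma inv: assumes m: "m \<ge> 1" and inj: "inj_on \<pi> {1..n}" shows "t \<le> n \<Longrightarrow> INV m \<pi> t"
proof (induction t)
  case 0 show ?case by (simp add: INV_def cnt_def)
next
  case (Suc t)
  then have i: "INV m \<pi> t" by simp
  obtain A B where "STEP m \<pi> t A B" using step_data[OF i inj_new[OF inj Suc.prems]] by blast
  then show ?case using inv_step[OF m i] by blast
qed




definition ei :: "nat \<Rightarrow> (nat \<Rightarrow> nat) \<Rightarrow> nat \<Rightarrow> nat" where
  "ei m \<pi> t = leaf_index (btree_hist m \<pi> t) (\<pi> (Suc t))"
definition pth :: "nat \<Rightarrow> (nat \<Rightarrow> nat) \<Rightarrow> nat \<Rightarrow> nat list" where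
  "pth m \<pi> l = extp (hist m \<pi> (l - 1)) ! ei m \<pi> (l - 1)"

lemma STEP_facts: assumes "STEP m \<pi> t A B"
  shows "ei m \<pi> t < length (extp (hist m \<pi> t))"
    and "\<And>q. lab (hist m \<pi> (Suc t)) q = (if q = extp (hist m \<pi> t) ! ei m \<pi> t then Some (Suc t) else lab (hist m \<pi> t) q)"
  using assms unfolding STEP_def Let_def ei_def by auto

lemma step_ex: assumes m: "m \<ge> 1" and inj: "inj_on \<pi> {1..n}" and t: "t < n"
  shows "\<exists>A B. STEP m \<pi> t A B"
  using step_data[OF inv[OF m inj] inj_new[OF inj]] t by simp

lemma labchar: assumes m: "m \<ge> 1" and inj: "inj_on \<pi> {1..n}"
  shows "t \<le> n \<Longrightarrow> lab (hist m \<pi> t) q = Some l \<longleftrightarrow> (1 \<le> l \<and> l \<le> t \<and> q = pth m \<pi> l)"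
proof (induction t arbitrary: q l)
  case 0 then show ?case by (simp add: lab_Ext)
next
  case (Suc t)
  obtain A B where st: "STEP m \<pi> t A B" using step_ex[OF m inj] Suc.prems by fastforce
  note F = STEP_facts[OF st]
  define r where "r = extp (hist m \<pi> t) ! ei m \<pi> t"
  have rN: "lab (hist m \<pi> t) r = None"
    using extp_Ext(1)[OF nth_mem[OF F(1)]] unfolding r_def lab_def by simp
  have pS: "pth m \<pi> (Suc t) = r" unfolding pth_def r_def by simp
  have IH: "\<And>q l. lab (hist m \<pi> t) q = Some l \<longleftrightarrow> (1 \<le> l \<and> l \<le> t \<and> q = pth m \<pi> l)"
    using Suc by simp
  show ?case
  proof (cases "q = r")
    case True
    have "\<not> (1 \<le> l \<and> l \<le> t \<and> q = pth m \<pi> l)" using IH[of q l] rN True by auto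
    then show ?thesis using F(2)[of q] True pS unfolding r_def[symmetric] by (auto simp: le_Suc_eq)
  next
    case False
    then show ?thesis using F(2)[of q] IH[of q l] pS unfolding r_def[symmetric] by (auto simp: le_Suc_eq)
  qed
qed


lemma STEP_D: assumes "STEP m \<pi> t A B"
  shows "flat (btree_hist m \<pi> t) = A @ Lf (leaf_keys (btree_hist m \<pi> t) (\<pi> (Suc t))) # B"
  and "flat (btree_hist m \<pi> (Suc t)) = A @ resF (leaf_res m (insort (\<pi> (Suc t)) (leaf_keys (btree_hist m \<pi> t) (\<pi> (Suc t))))) @ B"
  and "ei m \<pi> t = length (lvs A)" and "length (lvs A) = length (sps A)"
  and "\<forall>k\<in>set (keysF A). k < \<pi> (Suc t)" and "\<forall>k\<in>set (keysF B). \<pi> (Suc t) < k"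
  and "\<pi> (Suc t) \<notin> set (keysF (flat (btree_hist m \<pi> t)))"
  and "ei m \<pi> t < length (extp (hist m \<pi> t))"
  and "length (leaf_keys (btree_hist m \<pi> t) (\<pi> (Suc t))) = cnt m (length (extp (hist m \<pi> t) ! ei m \<pi> t))"
  and "extp (hist m \<pi> (Suc t)) = take (ei m \<pi> t) (extp (hist m \<pi> t)) @ map (\<lambda>c. extp (hist m \<pi> t) ! ei m \<pi> t @ [c]) [0..<arity m (length (extp (hist m \<pi> t) ! ei m \<pi> t))] @ drop (Suc (ei m \<pi> t)) (extp (hist m \<pi> t))"
  using assms unfolding STEP_def Let_def ei_def by (auto simp del: btree_hist.simps hist.simps)

lemma sps_leaf_res: "sps (resF (leaf_res m L)) = (if length L \<le> 2*m then [] else [L ! m])"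
  by (simp add: leaf_res_def)

lemma filt_cmp: fixes y K :: nat assumes "y \<notin> set S" "K \<in> set S"
  shows "y < K \<longleftrightarrow> length (filter (\<lambda>s. s < y) S) < length (filter (\<lambda>s. s \<le> K) S)"
proof
  assume yK: "y < K"
  have "filter (\<lambda>s. s < y) S = filter (\<lambda>s. s < y) (filter (\<lambda>s. s \<le> K) S)"
    unfolding filter_filter using yK by (intro filter_cong) auto
  moreover have "length (filter (\<lambda>s. s < y) (filter (\<lambda>s. s \<le> K) S)) < length (filter (\<lambda>s. s \<le> K) S)"
    using yK assms(2) by (intro length_filter_less[of K]) auto
  ultimately show "length (filter (\<lambda>s. s < y) S) < length (filter (\<lambda>s. s \<le> K) S)" by simp
next
  assume l: "length (filter (\<lambda>s. s < y) S) < length (filter (\<lambda>s. s \<le> K) S)"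
  show "y < K"
  proof (rule ccontr)
    assume "\<not> y < K"
    moreover have "y \<noteq> K" using assms by auto
    ultimately have Ky: "K < y" by simp
    have "filter (\<lambda>s. s \<le> K) S = filter (\<lambda>s. s \<le> K) (filter (\<lambda>s. s < y) S)"
      unfolding filter_filter using Ky by (intro filter_cong) auto
    then have "length (filter (\<lambda>s. s \<le> K) S) \<le> length (filter (\<lambda>s. s < y) S)"
      by (simp only: length_filter_le)
    then show False using l by simp
  qed
qed

lemma sep_split: assumes "\<forall>k\<in>set (keysF A). k < y" "\<forall>k\<in>set (keysF B). y < k"
  shows "y \<notin> set (sps A @ sps B) \<and> filter (\<lambda>s. s < y) (sps A @ sps B) = sps A"
proof -
  have a: "\<forall>k\<in>set (sps A). k < y" using assms(1) sps_keys[of A] by auto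
  have b: "\<forall>k\<in>set (sps B). y < k" using assms(2) sps_keys[of B] by auto
  have "filter (\<lambda>s. s < y) (sps A) = sps A" using a by simp
  moreover have "filter (\<lambda>s. s < y) (sps B) = []" using b by (auto simp: filter_empty_conv)
  ultimately show ?thesis using a b by auto
qed

lemma sps_flat_eq: "sps (A @ Lf lk # B) = sps A @ sps B" by simp

lemma bstep: assumes m: "m \<ge> 1" and inv: "INV m \<pi> t" and st: "STEP m \<pi> t A B"
  defines "S \<equiv> sps (flat (btree_hist m \<pi> t))"
  and "L \<equiv> insort (\<pi> (Suc t)) (leaf_keys (btree_hist m \<pi> t) (\<pi> (Suc t)))"
  and "P \<equiv> extp (hist m \<pi> t)" and "e \<equiv> ei m \<pi> t"
  shows "\<forall>y\<in>set L. y \<notin> set S \<and> length (filter (\<lambda>s. s < y) S) = e"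
    and "S = sps A @ sps B"
    and "sps (flat (btree_hist m \<pi> (Suc t))) = sps A @ (if length L \<le> 2*m then [] else [L ! m]) @ sps B"
    and "length L \<le> 2*m \<longleftrightarrow> \<not> branching_height m (length (P ! e))"
    and "\<not> length L \<le> 2*m \<Longrightarrow> m < length L"
    and "arity m (length (P ! e)) = (if length L \<le> 2*m then 1 else 2)"
    and "e < length P"
proof -
  define x where "x = \<pi> (Suc t)"
  define lk where "lk = leaf_keys (btree_hist m \<pi> t) (\<pi> (Suc t))"
  have Ld: "L = insort x lk" unfolding L_def lk_def x_def by simp
  have S: "flat (btree_hist m \<pi> t) = A @ Lf lk # B" "flat (btree_hist m \<pi> (Suc t)) = A @ resF (leaf_res m L) @ B"
    "e = length (lvs A)" "length (lvs A) = length (sps A)" "(\<forall>k\<in>set (keysF A). k < x)" "(\<forall>k\<in>set (keysF B). x < k)"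
    "x \<notin> set (keysF (flat (btree_hist m \<pi> t)))" "e < length P" "length lk = cnt m (length (P ! e))"
    using STEP_D[OF st] unfolding Ld lk_def x_def e_def P_def by simp_all
  have so: "sorted_wrt (<) (keysF (flat (btree_hist m \<pi> t)))" using inv unfolding INV_def by simp
  have so2: "sorted_wrt (<) (keysF A @ lk @ keysF B)" using so S(1) by simp
  show S2: "S = sps A @ sps B" unfolding S_def S(1) by simp
  show "\<forall>y\<in>set L. y \<notin> set S \<and> length (filter (\<lambda>s. s < y) S) = e"
  proof
    fix y assume y: "y \<in> set L"
    have "(\<forall>k\<in>set (keysF A). k < y) \<and> (\<forall>k\<in>set (keysF B). y < k)"
    proof (cases "y = x")
      case True then show ?thesis using S(5,6) by simp
    next
      case False
      then have "y \<in> set lk" using y unfolding Ld by (simp add: set_insort_key)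
      then show ?thesis using so2 by (auto simp: sorted_wrt_append)
    qed
    then show "y \<notin> set S \<and> length (filter (\<lambda>s. s < y) S) = e"
      using sep_split[of A y B] S2 S(3,4) by simp
  qed
  show "sps (flat (btree_hist m \<pi> (Suc t))) = sps A @ (if length L \<le> 2*m then [] else [L ! m]) @ sps B"
    unfolding S(2) by (simp add: sps_leaf_res)
  have lL: "length L = Suc (length lk)" unfolding Ld by (simp add: length_insort)
  have cl: "cnt m (length (P ! e)) \<le> 2*m" by (rule cnt_le)
  show br: "length L \<le> 2*m \<longleftrightarrow> \<not> branching_height m (length (P ! e))"
    using cnt_facts(1)[OF m, of "length (P ! e)"] S(9) lL cl by auto
  show "\<not> length L \<le> 2*m \<Longrightarrow> m < length L" by simp
  show "arity m (length (P ! e)) = (if length L \<le> 2*m then 1 else 2)"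
    using br by (simp add: arity_def)
  show "e < length P" by (rule S(8))
qed


lemma D_same: "D (p @ a) (p @ b) = D a b"
  by (induction p) auto

lemma sorted_split3: "sorted_wrt R P \<Longrightarrow> e < length P \<Longrightarrow>
   (\<forall>r\<in>set (take e P). R r (P ! e)) \<and> (\<forall>r\<in>set (drop (Suc e) P). R (P ! e) r)"
proof -
  assume s: "sorted_wrt R P" and e: "e < length P"
  have "P = take e P @ P ! e # drop (Suc e) P" using e by (simp add: id_take_nth_drop)
  then have "sorted_wrt R (take e P @ P ! e # drop (Suc e) P)" using s by simp
  then show ?thesis by (simp add: sorted_wrt_append)
qed

lemma hbase: assumes s: "sorted_wrt D P" and e: "e < length P"
  shows "length (filter (\<lambda>r. D r (P ! e @ [1])) (take e P @ map (\<lambda>c. P ! e @ [c]) [0..<2] @ drop (Suc e) P)) = Suc e"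
proof -
  note sp = sorted_split3[OF s e]
  have a: "filter (\<lambda>r. D r (P ! e @ [1])) (take e P) = take e P"
    using sp D_app[of _ "P ! e" "[]" "[1]"] by (auto simp: filter_id_conv)
  have b: "filter (\<lambda>r. D r (P ! e @ [1])) (drop (Suc e) P) = []"
  proof -
    have "\<forall>r\<in>set (drop (Suc e) P). \<not> D r (P ! e @ [1])"
      using sp D_app[of "P ! e" _ "[1]" "[]"] D_asym by fastforce
    then show ?thesis by (simp add: filter_empty_conv)
  qed
  have c: "filter (\<lambda>r. D r (P ! e @ [1])) (map (\<lambda>c. P ! e @ [c]) [0..<2]) = [P ! e @ [0]]"
    by (simp add: upt_rec D_same D_irrefl)
  show ?thesis using a b c e by simp
qed

lemma hstep: assumes e: "e < length P" and q: "\<forall>c. Q (P ! e @ [c]) = Q (P ! e)" and a: "1 \<le> a"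
  shows "length (filter Q (take e P @ map (\<lambda>c. P ! e @ [c]) [0..<a] @ drop (Suc e) P)) = length (filter Q P) + (if Q (P ! e) then a - 1 else 0)"
proof -
  have P: "P = take e P @ P ! e # drop (Suc e) P" using e by (simp add: id_take_nth_drop)
  have "length (filter Q P) = length (filter Q (take e P)) + (if Q (P ! e) then 1 else 0) + length (filter Q (drop (Suc e) P))"
    by (subst P) simp
  moreover have "filter Q (map (\<lambda>c. P ! e @ [c]) [0..<a]) = (if Q (P ! e) then map (\<lambda>c. P ! e @ [c]) [0..<a] else [])"
    using q by (auto simp: filter_id_conv filter_empty_conv)
  ultimately show ?thesis using a by simp
qed

lemma lab_pth: assumes m: "m \<ge> 1" and inj: "inj_on \<pi> {1..n}" and "1 \<le> i" "i \<le> t" "t \<le> n"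
  shows "lab (hist m \<pi> t) (pth m \<pi> i) = Some i"
  using labchar[OF m inj, of t "pth m \<pi> i" i] assms by simp

lemma not_strict_prefix: assumes "lab H p = Some i" "r \<in> set (extp H)"
  shows "\<not> (prefix r (p @ [1]) \<and> r \<noteq> p @ [1])" and "\<not> prefix r p"
proof -
  have rE: "subt H r = Ext" using extp_Ext(1)[OF assms(2)] .
  show np: "\<not> prefix r p"
  proof
    assume "prefix r p"
    then obtain s where "p = r @ s" by (auto simp: prefix_def)
    then have "subt H p = Ext" using rE by (simp add: subt_append)
    then show False using assms(1) by (simp add: lab_def)
  qed
  show "\<not> (prefix r (p @ [1]) \<and> r \<noteq> p @ [1])" using np by simp
qed


lemma pth_Suc: "pth m \<pi> (Suc t) = extp (hist m \<pi> t) ! ei m \<pi> t"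
  by (simp add: pth_def)

lemma boundary:
  assumes m: "m \<ge> 1" and inj: "inj_on \<pi> {1..n}" and i: "1 \<le> i"
    and br: "branching_height m (length (pth m \<pi> i))"
  shows "i \<le> t \<Longrightarrow> t \<le> n \<Longrightarrow> median_key m \<pi> i \<in> set (sps (flat (btree_hist m \<pi> t))) \<and>
     length (filter (\<lambda>s. s \<le> median_key m \<pi> i) (sps (flat (btree_hist m \<pi> t)))) =
     length (filter (\<lambda>r. D r (pth m \<pi> i @ [1])) (extp (hist m \<pi> t)))"
proof (induction t)
  case 0 then show ?case using i by simp
next
  case (Suc t)
  define K where "K = median_key m \<pi> i"
  define p where "p = pth m \<pi> i"
  have tn: "t < n" using Suc.prems by simp
  have invt: "INV m \<pi> t" using inv[OF m inj] tn by simp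
  obtain A B where st: "STEP m \<pi> t A B" using step_ex[OF m inj tn] by blast
  define L where "L = insort (\<pi> (Suc t)) (leaf_keys (btree_hist m \<pi> t) (\<pi> (Suc t)))"
  define S where "S = sps (flat (btree_hist m \<pi> t))"
  define P where "P = extp (hist m \<pi> t)"
  define e where "e = ei m \<pi> t"
  note bs = bstep[OF m invt st, folded L_def S_def P_def e_def]
  have Pext: "P ! e \<in> set P" using bs(7) by simp
  have sP: "sorted_wrt D P" unfolding P_def by (rule extp_sorted)
  show ?case
  proof (cases "Suc t = i")
    case True
    have pe: "p = P ! e" unfolding p_def P_def e_def using True pth_Suc by metis
    have brn: "\<not> length L \<le> 2*m" using bs(4) br True pe unfolding p_def by simp
    have KL: "K = L ! m" unfolding K_def L_def median_key_def using True by auto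
    have Kin: "K \<in> set L" using KL bs(5)[OF brn] by simp
    have S': "sps (flat (btree_hist m \<pi> (Suc t))) = sps A @ [K] @ sps B" using bs(3) brn KL by simp
    have KS: "K \<notin> set S" "length (filter (\<lambda>s. s < K) S) = e" using bs(1) Kin by auto
    have "filter (\<lambda>s. s \<le> K) S = filter (\<lambda>s. s < K) S" using KS(1) by (intro filter_cong) (auto simp: order_le_less)
    then have "length (filter (\<lambda>s. s \<le> K) (sps A @ sps B)) = e" using KS(2) bs(2) by simp
    then have cntB: "length (filter (\<lambda>s. s \<le> K) (sps (flat (btree_hist m \<pi> (Suc t))))) = Suc e" using S' by simp
    have ar: "arity m (length (P ! e)) = 2" using bs(6) brn by simp
    have ext': "extp (hist m \<pi> (Suc t)) = take e P @ map (\<lambda>c. P ! e @ [c]) [0..<2] @ drop (Suc e) P"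
      using STEP_D(10)[OF st] ar unfolding P_def e_def by simp
    have cntH: "length (filter (\<lambda>r. D r (p @ [1])) (extp (hist m \<pi> (Suc t)))) = Suc e"
      unfolding ext' pe using hbase[OF sP bs(7)] .
    show ?thesis using cntB cntH S' unfolding K_def[symmetric] p_def[symmetric] by simp
  next
    case False
    then have it: "i \<le> t" using Suc.prems by simp
    have IH: "K \<in> set S" "length (filter (\<lambda>s. s \<le> K) S) = length (filter (\<lambda>r. D r (p @ [1])) P)"
      using Suc.IH it tn unfolding K_def p_def S_def P_def by auto
    have labp: "lab (hist m \<pi> t) p = Some i" unfolding p_def using lab_pth[OF m inj i it] tn by simp
    have nsp: "\<not> (prefix (P ! e) (p @ [1]) \<and> P ! e \<noteq> p @ [1])"
      using not_strict_prefix(1)[OF labp] Pext unfolding P_def by blast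
    have qc: "\<forall>c. D (P ! e @ [c]) (p @ [1]) = D (P ! e) (p @ [1])" using D_snoc[OF nsp] by blast
    have Qe: "D (P ! e) (p @ [1]) \<longleftrightarrow> e < length (filter (\<lambda>r. D r (p @ [1])) P)"
      using gen_prefix[OF sP _ bs(7), of "\<lambda>r. D r (p @ [1])"] D_trans by blast
    have ext': "extp (hist m \<pi> (Suc t)) = take e P @ map (\<lambda>c. P ! e @ [c]) [0..<arity m (length (P ! e))] @ drop (Suc e) P"
      using STEP_D(10)[OF st] unfolding P_def e_def by simp
    have cntH: "length (filter (\<lambda>r. D r (p @ [1])) (extp (hist m \<pi> (Suc t)))) =
        length (filter (\<lambda>r. D r (p @ [1])) P) + (if D (P ! e) (p @ [1]) then arity m (length (P ! e)) - 1 else 0)"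
      unfolding ext' by (rule hstep[OF bs(7) qc]) (simp add: arity_def)
    show ?thesis
    proof (cases "length L \<le> 2*m")
      case True
      have S': "sps (flat (btree_hist m \<pi> (Suc t))) = sps A @ sps B" using bs(3) True by simp
      have "arity m (length (P ! e)) = 1" using bs(6) True by simp
      then show ?thesis using S' cntH IH bs(2) unfolding K_def[symmetric] p_def[symmetric] S_def by simp
    next
      case False
      have S': "sps (flat (btree_hist m \<pi> (Suc t))) = sps A @ [L ! m] @ sps B" using bs(3) False by simp
      have ar: "arity m (length (P ! e)) = 2" using bs(6) False by simp
      have Lm: "L ! m \<in> set L" using bs(5)[OF False] by simp
      have LmS: "L ! m \<notin> set S" "length (filter (\<lambda>s. s < L ! m) S) = e" using bs(1) Lm by auto
      have "L ! m < K \<longleftrightarrow> e < length (filter (\<lambda>s. s \<le> K) S)" using filt_cmp[OF LmS(1) IH(1)] LmS(2) by simp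
      moreover have "L ! m \<noteq> K" using LmS(1) IH(1) by auto
      ultimately have "L ! m \<le> K \<longleftrightarrow> D (P ! e) (p @ [1])" using Qe IH(2) by auto
      then show ?thesis using S' cntH IH bs(2) ar unfolding K_def[symmetric] p_def[symmetric] S_def by auto
    qed
  qed
qed


lemma branching_pth: assumes m: "m \<ge> 1" and inj: "inj_on \<pi> {1..n}" and b: "is_branching m (hist m \<pi> n) l"
  shows "branching_height m (length (pth m \<pi> l))" and "1 \<le> l" "l \<le> n"
proof -
  obtain p0 where p0: "vertex_at (hist m \<pi> n) p0 l" "branching_height m (length p0)"
    using b unfolding is_branching_def by blast
  have "1 \<le> l \<and> l \<le> n \<and> p0 = pth m \<pi> l" using labchar[OF m inj, of n p0 l] p0(1) by (simp add: vertex_at_lab)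
  then show "branching_height m (length (pth m \<pi> l))" "1 \<le> l" "l \<le> n" using p0(2) by auto
qed

lemma comps_pth: assumes m: "m \<ge> 1" and inj: "inj_on \<pi> {1..n}" and l: "1 \<le> l" "l \<le> n"
  shows "\<forall>c\<in>set (pth m \<pi> l). c < 2" and "pth m \<pi> l \<in> set (extp (hist m \<pi> (l - 1)))"
proof -
  have "l - 1 < n" using l by simp
  then obtain A B where st: "STEP m \<pi> (l - 1) A B" using step_ex[OF m inj] by blast
  have "ei m \<pi> (l - 1) < length (extp (hist m \<pi> (l - 1)))" using STEP_D(8)[OF st] .
  then show pin: "pth m \<pi> l \<in> set (extp (hist m \<pi> (l - 1)))" unfolding pth_def by simp
  have "INV m \<pi> (l - 1)" using inv[OF m inj, of "l - 1"] l by simp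
  then show "\<forall>c\<in>set (pth m \<pi> l). c < 2" using pin unfolding INV_def by blast
qed

theorem lemma3p2:
  fixes m n i j :: nat and \<pi> :: "nat \<Rightarrow> nat"
  assumes "m \<ge> 1"
    and "bij_betw \<pi> {1..n} {1..n}"
    and "1 \<le> i" "i < j" "j \<le> n"
    and "is_branching m (hist m \<pi> n) i"
  shows "(right_of (hist m \<pi> n) i j \<longrightarrow> \<pi> j > median_key m \<pi> i)
       \<and> (\<not> right_of (hist m \<pi> n) i j \<longrightarrow> \<pi> j < median_key m \<pi> i)
       \<and> (is_branching m (hist m \<pi> n) j \<longrightarrow>
            (right_of (hist m \<pi> n) i j \<longrightarrow> median_key m \<pi> j > median_key m \<pi> i)
          \<and> (\<not> right_of (hist m \<pi> n) i j \<longrightarrow> median_key m \<pi> j < median_key m \<pi> i))"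
proof -
  note m = assms(1)
  have inj: "inj_on \<pi> {1..n}" using assms(2) by (rule bij_betw_imp_inj_on)
  define t where "t = j - 1"
  have tj: "Suc t = j" "i \<le> t" "t < n" using assms(3,4,5) unfolding t_def by auto
  define K where "K = median_key m \<pi> i"
  define p where "p = pth m \<pi> i"
  define q where "q = pth m \<pi> j"
  have br: "branching_height m (length p)" unfolding p_def by (rule branching_pth[OF m inj assms(6)])
  have bd: "K \<in> set (sps (flat (btree_hist m \<pi> t)))"
    "length (filter (\<lambda>s. s \<le> K) (sps (flat (btree_hist m \<pi> t)))) = length (filter (\<lambda>r. D r (p @ [1])) (extp (hist m \<pi> t)))"
    using boundary[OF m inj assms(3) br[unfolded p_def], of t] tj unfolding K_def p_def by auto
  have invt: "INV m \<pi> t" using inv[OF m inj] tj by simp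
  obtain A B where st: "STEP m \<pi> t A B" using step_ex[OF m inj tj(3)] by blast
  define L where "L = insort (\<pi> (Suc t)) (leaf_keys (btree_hist m \<pi> t) (\<pi> (Suc t)))"
  define S where "S = sps (flat (btree_hist m \<pi> t))"
  define P where "P = extp (hist m \<pi> t)"
  define e where "e = ei m \<pi> t"
  note bs = bstep[OF m invt st, folded L_def S_def P_def e_def]
  have sP: "sorted_wrt D P" unfolding P_def by (rule extp_sorted)
  have qe: "q = P ! e" unfolding q_def P_def e_def using tj(1) pth_Suc by metis
  have xL: "\<pi> j \<in> set L" unfolding L_def using tj(1) by (simp add: set_insort_key)
  have xS: "\<pi> j \<notin> set S" "length (filter (\<lambda>s. s < \<pi> j) S) = e" using bs(1) xL by auto
  have KS: "K \<in> set S" using bd(1) unfolding S_def .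
  have Qe: "D (P ! e) (p @ [1]) \<longleftrightarrow> e < length (filter (\<lambda>r. D r (p @ [1])) P)"
    using gen_prefix[OF sP _ bs(7), of "\<lambda>r. D r (p @ [1])"] D_trans by blast
  have xK: "\<pi> j < K \<longleftrightarrow> D q (p @ [1])"
    using filt_cmp[OF xS(1) KS] xS(2) bd(2) Qe qe unfolding S_def[symmetric] P_def[symmetric] by simp
  have xneK: "\<pi> j \<noteq> K" using xS(1) KS by auto
  have vi: "\<And>p'. vertex_at (hist m \<pi> n) p' i \<longleftrightarrow> p' = p"
  proof -
    fix p'
    have "lab (hist m \<pi> n) p' = Some i \<longleftrightarrow> (1 \<le> i \<and> i \<le> n \<and> p' = pth m \<pi> i)"
      by (rule labchar[OF m inj order_refl])
    then show "vertex_at (hist m \<pi> n) p' i \<longleftrightarrow> p' = p" unfolding vertex_at_lab p_def using assms(3,4,5) by simp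
  qed
  have vj: "\<And>q'. vertex_at (hist m \<pi> n) q' j \<longleftrightarrow> q' = q"
  proof -
    fix q'
    have "lab (hist m \<pi> n) q' = Some j \<longleftrightarrow> (1 \<le> j \<and> j \<le> n \<and> q' = pth m \<pi> j)"
      by (rule labchar[OF m inj order_refl])
    then show "vertex_at (hist m \<pi> n) q' j \<longleftrightarrow> q' = q" unfolding vertex_at_lab q_def using assms(3,4,5) by simp
  qed
  have ro: "right_of (hist m \<pi> n) i j \<longleftrightarrow> (prefix (p @ [1]) q \<or> (\<not> prefix p q \<and> prefix (common_prefix p q @ [1]) q))"
    unfolding right_of_def vi vj by simp
  have cp: "\<forall>c\<in>set p. c < 2" unfolding p_def using comps_pth(1)[OF m inj assms(3)] assms(4,5) by simp
  have cq: "\<forall>c\<in>set q. c < 2" unfolding q_def using comps_pth(1)[OF m inj, of j] assms(3,4,5) by simp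
  have labp: "lab (hist m \<pi> t) p = Some i" unfolding p_def using lab_pth[OF m inj assms(3) tj(2)] tj(3) by simp
  have qin: "q \<in> set (extp (hist m \<pi> t))" using qe bs(7) unfolding P_def by simp
  have npq: "\<not> prefix q p" using not_strict_prefix(2)[OF labp qin] .
  have roD: "right_of (hist m \<pi> n) i j \<longleftrightarrow> \<not> D q (p @ [1])" using ro cond_iff[OF cp cq npq] by simp
  have part1: "(right_of (hist m \<pi> n) i j \<longrightarrow> \<pi> j > K) \<and> (\<not> right_of (hist m \<pi> n) i j \<longrightarrow> \<pi> j < K)"
    using roD xK xneK by auto
  have part2: "is_branching m (hist m \<pi> n) j \<longrightarrow>
            (right_of (hist m \<pi> n) i j \<longrightarrow> median_key m \<pi> j > K)
          \<and> (\<not> right_of (hist m \<pi> n) i j \<longrightarrow> median_key m \<pi> j < K)"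
  proof
    assume bj: "is_branching m (hist m \<pi> n) j"
    have brj: "branching_height m (length (P ! e))" using branching_pth(1)[OF m inj bj] qe unfolding q_def by simp
    have spl: "\<not> length L \<le> 2*m" using bs(4) brj by simp
    have KjL: "median_key m \<pi> j = L ! m" unfolding median_key_def L_def using tj(1) by auto
    have Lm: "L ! m \<in> set L" using bs(5)[OF spl] by simp
    have LmS: "L ! m \<notin> set S" "length (filter (\<lambda>s. s < L ! m) S) = e" using bs(1) Lm by auto
    have "L ! m < K \<longleftrightarrow> \<pi> j < K"
      using filt_cmp[OF LmS(1) KS] LmS(2) filt_cmp[OF xS(1) KS] xS(2) by simp
    moreover have "L ! m \<noteq> K" using LmS(1) KS by auto
    ultimately show "(right_of (hist m \<pi> n) i j \<longrightarrow> median_key m \<pi> j > K)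
          \<and> (\<not> right_of (hist m \<pi> n) i j \<longrightarrow> median_key m \<pi> j < K)"
      using part1 KjL by auto
  qed
  show ?thesis using part1 part2 unfolding K_def by blast
qed


end
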